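(* Let $L>0$ be fixed and let the constant renormalized force $F=F(N)>0$ satisfy $F(N)=o(N)$ as $N\to\infty$. Then the fixed point satisfies $$\max_{1\le k\le N}\Big|(x_{k-1}-x_k)-\frac LN\Big|=o\Big(\frac1N\Big)\quad (N\to\infty),$$ so in particular the particle density exists and is the constant $1/L$ on $[-L,0]$.
   Context: A configuration consists of $N+1$ point particles $-L\le x_N<\dots<x_1<x_0\le 0$ on $[-L,0]$ with potential energy $U=\sum_{i=1}^{N}\frac{\alpha_{int}}{x_{i-1}-x_i}-\sum_{i=0}^{N}\int_{-L}^{x_i}\alpha_{ext}F_0\,dx$, $\alpha_{int},\alpha_{ext}>0$, with constant $F_0>0$; the renormalized force is the constant $F=\frac{\alpha_{ext}}{\alpha_{int}}F_0$, which may depend on $N$ (the external force pushes particles towards $0$). Write $\delta_k=x_{k-1}-x_k$, $f_k=\delta_k^{-2}$. The walls at $0,-L$ are completely inelastic. A fixed point is a configuration with $x_0=0$, $f_{k+1}+F=f_k$ for $k=1,\dots,N-1$, and either $x_N=-L$ with $f_N\ge F$, or $x_N>-L$ with $f_N=F$; it exists and is unique. The density $\rho$ of the fixed points (as $N\to\infty$) is a function on $[-L,0]$ such that for every subinterval $I\subset[-L,0]$, $\int_I\rho(x)\,dx=\lim_{N\to\infty}\frac{\#\{i:x_i\in I\}}{N}$. *)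

theory Defs
  imports "HOL-Analysis.Analysis"
begin

definition configuration :: "real \<Rightarrow> nat \<Rightarrow> (nat \<Rightarrow> real) \<Rightarrow> bool" where
  "configuration L N x \<longleftrightarrow> -L \<le> x N \<and> x 0 \<le> 0 \<and> (\<forall>k\<in>{1..N}. x k < x (k - 1))"

definition fk :: "(nat \<Rightarrow> real) \<Rightarrow> nat \<Rightarrow> real" where
  "fk x k = 1 / (x (k - 1) - x k)\<^sup>2"

definition fixed_point :: "real \<Rightarrow> real \<Rightarrow> nat \<Rightarrow> (nat \<Rightarrow> real) \<Rightarrow> bool" where
  "fixed_point L F N x \<longleftrightarrow> configuration L N x \<and> x 0 = 0 \<and>
     (\<forall>k\<in>{1..N - 1}. fk x (k + 1) + F = fk x k) \<and>
     ((x N = -L \<and> fk x N \<ge> F) \<or> (x N > -L \<and> fk x N = F))"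

end

theory Submission
  imports Defs
begin

lemma fp_rec_aux:
  assumes fp: "fixed_point L F N x" and j: "j \<le> N - 1"
  shows "fk x (N - j) = fk x N + real j * F"
  using j
proof (induction j)
  case 0 then show ?case by simp
next
  case (Suc j)
  then have IH: "fk x (N - j) = fk x N + real j * F" by simp
  have k: "N - Suc j \<in> {1..N - 1}" using Suc.prems by auto
  have "fk x (N - Suc j + 1) + F = fk x (N - Suc j)"
    using fp k unfolding fixed_point_def by blast
  moreover have "N - Suc j + 1 = N - j" using Suc.prems by auto
  ultimately show ?case using IH by (simp add: algebra_simps)
qed

lemma fp_rec:
  assumes fp: "fixed_point L F N x" and k: "k \<in> {1..N}"
  shows "fk x k = fk x N + real (N - k) * F"
  using fp_rec_aux[OF fp, of "N - k"] k by auto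

lemma telesc: "(\<Sum>k\<in>{1..i::nat}. (x (k - 1) - x k)) = x 0 - (x i :: real)"
  by (induction i) (auto simp: sum.cl_ivl_Suc)

lemma inv_sq_le:
  fixes p q :: real
  assumes "p > 0" "q > 0" "1 / p^2 \<le> 1 / q^2"
  shows "q \<le> p"
proof -
  have "q^2 \<le> p^2" using assms by (simp add: divide_simps)
  then show ?thesis using assms by (simp add: power2_le_iff_abs_le)
qed

lemma lemA:
  assumes L: "L > 0" and F: "F > 0" and N: "N \<ge> 1" and fp: "fixed_point L F N x"
    and small: "F \<le> real N / (2 * L^2)"
  shows "\<forall>k\<in>{1..N}. \<bar>x (k - 1) - x k - L / real N\<bar> \<le> 2 * L^3 * F / (real N)^2"
proof -
  define d where "d k = x (k - 1) - x k" for k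
  have conf: "configuration L N x" "x 0 = 0" using fp unfolding fixed_point_def by auto
  have dpos: "d k > 0" if "k \<in> {1..N}" for k
    using conf(1) that unfolding configuration_def d_def by auto
  have fkd: "fk x k = 1 / (d k)^2" for k unfolding fk_def d_def by simp
  have sumd: "(\<Sum>k\<in>{1..N}. d k) = - x N" unfolding d_def using telesc[of x N] conf(2) by simp
  have xN: "x N \<ge> -L" using conf(1) unfolding configuration_def by auto
  define u where "u = d N"
  define v where "v = d 1"
  have N1: "1 \<in> {1..N}" "N \<in> {1..N}" using N by auto
  have upos: "u > 0" and vpos: "v > 0" using dpos N1 unfolding u_def v_def by auto
  have mono: "v \<le> d k \<and> d k \<le> u" if k: "k \<in> {1..N}" for k
  proof
    have "fk x k \<le> fk x 1" using fp_rec[OF fp k] fp_rec[OF fp N1(1)] k F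
      by (auto intro!: mult_right_mono)
    then show "v \<le> d k" unfolding v_def fkd using inv_sq_le dpos k N1 by blast
    have "fk x N \<le> fk x k" using fp_rec[OF fp k] F by simp
    then show "d k \<le> u" unfolding u_def fkd using inv_sq_le dpos k N1 by blast
  qed
  have cardN: "card {1..N} = N" by simp
  have "real N * v \<le> (\<Sum>k\<in>{1..N}. d k)"
    using sum_bounded_below[of "{1..N}" v d] mono cardN by simp
  also have "\<dots> \<le> L" using sumd xN by simp
  finally have vL: "real N * v \<le> L" .
  have Npos: "real N > 0" using N by simp
  have vL2: "v \<le> L / real N" using vL Npos by (simp add: field_simps)
  have "(real N / L)^2 \<le> (1 / v)^2"
    using vL2 vpos L Npos by (intro power_mono) (auto simp: field_simps)
  then have f1: "fk x 1 \<ge> (real N)^2 / L^2"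
    unfolding fkd v_def[symmetric] by (simp add: power_divide)
  have f1N: "fk x 1 = fk x N + real (N - 1) * F" using fp_rec[OF fp N1(1)] .
  have "real (N - 1) * F \<le> real N * F" using F by (intro mult_right_mono) auto
  also have NF0: "real N * F \<le> real N * (real N / (2 * L^2))" using small Npos by (intro mult_left_mono) auto
  also have "\<dots> = (real N)^2 / (2 * L^2)" by (simp add: power2_eq_square)
  finally have NF: "real (N - 1) * F \<le> (real N)^2 / (2 * L^2)" .
  have aLow: "fk x N \<ge> (real N)^2 / (2 * L^2)" using f1 f1N NF by simp
  have "F \<le> (real N)^2 / (2 * L^2)"
  proof -
    have "real N \<le> (real N)^2" using N by (simp add: power2_eq_square)
    then show ?thesis using small L by (smt (verit) divide_right_mono zero_le_power2 mult_pos_pos)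
  qed
  have "fk x N \<noteq> F"
  proof
    assume "fk x N = F"
    with f1 f1N have "(real N)^2 / L^2 \<le> real N * F" using N
      by (simp add: algebra_simps of_nat_diff)
    also have "\<dots> \<le> (real N)^2 / (2 * L^2)" using NF0
      by (simp add: power2_eq_square)
    finally show False using Npos L by (simp add: field_simps)
  qed
  then have xNL: "x N = -L" using fp unfolding fixed_point_def by auto
  have "L \<le> real N * u"
    using sum_bounded_above[of "{1..N}" d u] mono cardN sumd xNL by simp
  then have uL: "L / real N \<le> u" using Npos by (simp add: field_simps)
  have "1 / u^2 \<ge> (real N)^2 / (2 * L^2)" using aLow unfolding fkd u_def .
  then have "u^2 \<le> 2 * L^2 / (real N)^2" using upos L Npos by (simp add: field_simps)
  also have "\<dots> \<le> (2 * L / real N)^2" using L Npos by (simp add: field_simps power2_eq_square)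
  finally have u2: "u \<le> 2 * L / real N" using upos L Npos
    by (meson less_le power2_le_imp_le zero_le_divide_iff zero_le_mult_iff zero_le_numeral)
  have uv: "v \<le> u" using mono N1 unfolding v_def by auto
  have key: "u - v \<le> (1 / v^2 - 1 / u^2) * u * v^2"
  proof -
    have "(1 / v^2 - 1 / u^2) * u * v^2 = (u^2 - v^2) / u" using upos vpos
      by (simp add: field_simps power2_eq_square)
    also have "\<dots> = (u - v) * ((u + v) / u)" using upos by (simp add: field_simps power2_eq_square)
    also have "\<dots> \<ge> (u - v) * 1" using uv upos vpos
      by (intro mult_left_mono) (auto simp: field_simps)
    finally show ?thesis by simp
  qed
  have diff: "1 / v^2 - 1 / u^2 = real (N - 1) * F"
    using f1N unfolding fkd u_def v_def by simp
  have "u - v \<le> real (N - 1) * F * u * v^2" using key diff by simp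
  also have "\<dots> \<le> (real N * F) * (2 * L / real N) * (L / real N)^2"
    using F L upos vpos u2 vL2 \<open>real (N - 1) * F \<le> real N * F\<close>
    by (intro mult_mono power_mono) auto
  also have "\<dots> = 2 * L^3 * F / (real N)^2" using Npos by (simp add: field_simps power2_eq_square power3_eq_cube)
  finally have uvb: "u - v \<le> 2 * L^3 * F / (real N)^2" .
  show ?thesis
  proof
    fix k assume k: "k \<in> {1..N}"
    have "\<bar>d k - L / real N\<bar> \<le> u - v" using mono[OF k] uL vL2 by auto
    then show "\<bar>x (k - 1) - x k - L / real N\<bar> \<le> 2 * L^3 * F / (real N)^2"
      using uvb unfolding d_def by simp
  qed
qed

lemma lemA2:
  assumes L: "L > 0" and F: "F > 0" and N: "N \<ge> 1" and fp: "fixed_point L F N x"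
    and small: "F \<le> real N / (2 * L^2)" and i: "i \<le> N"
  shows "\<bar>x i + real i * (L / real N)\<bar> \<le> 2 * L^3 * F / real N"
proof -
  have B: "\<forall>k\<in>{1..N}. \<bar>x (k - 1) - x k - L / real N\<bar> \<le> 2 * L^3 * F / (real N)^2"
    using lemA[OF assms(1-5)] .
  have x0: "x 0 = 0" using fp unfolding fixed_point_def by auto
  have "x i + real i * (L / real N) = - (\<Sum>k\<in>{1..i}. (x (k - 1) - x k - L / real N))"
    using telesc[of x i] x0 by (simp add: sum_subtractf)
  then have "\<bar>x i + real i * (L / real N)\<bar> \<le> (\<Sum>k\<in>{1..i}. \<bar>x (k - 1) - x k - L / real N\<bar>)"
    by (simp add: sum_abs del: abs_minus_cancel)
  also have "\<dots> \<le> real (card {1..i}) * (2 * L^3 * F / (real N)^2)"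
    using B i by (intro sum_bounded_above) auto
  also have "\<dots> \<le> real N * (2 * L^3 * F / (real N)^2)"
    using i L F by (intro mult_right_mono) auto
  also have "\<dots> = 2 * L^3 * F / real N" using N by (simp add: power2_eq_square)
  finally show ?thesis .
qed

lemma cnt_upper:
  fixes h c d :: real
  assumes h: "h > 0" and cd: "c \<le> d"
  shows "real (card {i. i \<le> N \<and> c \<le> real i * h \<and> real i * h \<le> d}) \<le> (d - c) / h + 1"
proof (cases "{i. i \<le> N \<and> c \<le> real i * h \<and> real i * h \<le> d} = {}")
  case True
  have "(d - c) / h \<ge> 0" using h cd by simp
  then show ?thesis unfolding True by simp
next
  case False
  define T where "T = {i. i \<le> N \<and> c \<le> real i * h \<and> real i * h \<le> d}"
  have fin: "finite T" unfolding T_def by auto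
  have ne: "T \<noteq> {}" using False unfolding T_def .
  define m where "m = Min T"
  define M where "M = Max T"
  have mT: "m \<in> T" and MT: "M \<in> T" unfolding m_def M_def using fin ne by auto
  have sub: "T \<subseteq> {m..M}" unfolding m_def M_def using fin ne by auto
  have mM: "m \<le> M" using sub mT by auto
  have "card T \<le> card {m..M}" using sub by (intro card_mono) auto
  then have "real (card T) \<le> real M + 1 - real m" using mM by (simp add: of_nat_diff)
  also have "real M * h - real m * h \<le> d - c" using mT MT unfolding T_def by auto
  then have "real M - real m \<le> (d - c) / h" using h by (simp add: field_simps)
  then have "real M + 1 - real m \<le> (d - c) / h + 1" by simp
  finally show ?thesis unfolding T_def .
qed

lemma cnt_lower:
  fixes h c d :: real
  assumes h: "h > 0" and c: "0 \<le> c" and d: "d \<le> real N * h"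
  shows "real (card {i. i \<le> N \<and> c \<le> real i * h \<and> real i * h \<le> d}) \<ge> (d - c) / h - 1"
proof (cases "d \<ge> 0")
  case False
  then have "(d - c) / h - 1 \<le> 0" using h c by (simp add: divide_nonpos_pos)
  then show ?thesis by (smt (verit) of_nat_0_le_iff)
next
  case True
  define m where "m = nat \<lceil>c / h\<rceil>"
  define M where "M = nat \<lfloor>d / h\<rfloor>"
  have rm: "real m < c / h + 1" unfolding m_def using c h
    by (simp add: ceiling_less_iff) (smt (verit) ceiling_correct of_int_ceiling_le_add_one)
  have rm2: "c / h \<le> real m" unfolding m_def using c h by (simp add: real_nat_ceiling_ge)
  have rM: "real M > d / h - 1" unfolding M_def using True h
    by (simp add: floor_correct)
  have rM2: "real M \<le> d / h" unfolding M_def using True h by simp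
  have sub: "{m..M} \<subseteq> {i. i \<le> N \<and> c \<le> real i * h \<and> real i * h \<le> d}"
  proof
    fix i assume "i \<in> {m..M}"
    then have i1: "real m \<le> real i" "real i \<le> real M" by auto
    have "real i \<le> d / h" using i1 rM2 by simp
    also have "\<dots> \<le> real N" using d h by (simp add: field_simps)
    finally have "i \<le> N" by simp
    moreover have "c \<le> real i * h"
    proof -
      have a: "real m * h \<le> real i * h" using i1 h by (intro mult_right_mono) auto
      have b: "c \<le> real m * h" using rm2 h by (simp add: field_simps)
      show ?thesis using a b by linarith
    qed
    moreover have "real i * h \<le> d"
    proof -
      have a: "real i * h \<le> real M * h" using i1 h by (intro mult_right_mono) auto
      have b: "real M * h \<le> d" using rM2 h by (simp add: field_simps)
      show ?thesis using a b by linarith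
    qed
    ultimately show "i \<in> {i. i \<le> N \<and> c \<le> real i * h \<and> real i * h \<le> d}" by simp
  qed
  have "card {m..M} \<le> card {i. i \<le> N \<and> c \<le> real i * h \<and> real i * h \<le> d}"
    using sub by (intro card_mono) auto
  moreover have "real (card {m..M}) \<ge> real M + 1 - real m" by (simp add: of_nat_diff_real)
  moreover have "real M + 1 - real m \<ge> (d - c) / h - 1" using rm rM h by (simp add: diff_divide_distrib)
  ultimately show ?thesis by (smt (verit) of_nat_le_iff)
qed

lemma lemB:
  fixes y :: "nat \<Rightarrow> real"
  assumes L: "L > 0" and N: "N \<ge> 1" and e: "e \<ge> 0"
    and y: "\<And>i. i \<le> N \<Longrightarrow> \<bar>y i + real i * (L / real N)\<bar> \<le> e"
    and ab: "-L \<le> a" "a \<le> b" "b \<le> 0"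
  shows "real (card {i\<in>{0..N}. y i \<in> {a..b}}) / real N \<le> (b - a + 2 * e) / L + 1 / real N"
    and "(b - a - 2 * e) / L - 1 / real N \<le> real (card {i\<in>{0..N}. y i \<in> {a..b}}) / real N"
proof -
  define h where "h = L / real N"
  have Npos: "real N > 0" using N by simp
  have h: "h > 0" unfolding h_def using L Npos by simp
  have Nh: "real N * h = L" unfolding h_def using Npos by simp
  let ?S = "{i\<in>{0..N}. y i \<in> {a..b}}"
  have finS: "finite ?S" by simp
  let ?T = "{i. i \<le> N \<and> -b - e \<le> real i * h \<and> real i * h \<le> -a + e}"
  have "?S \<subseteq> ?T"
  proof
    fix i assume "i \<in> ?S"
    then have i: "i \<le> N" "a \<le> y i" "y i \<le> b" by auto
    have "\<bar>y i + real i * h\<bar> \<le> e" using y[OF i(1)] unfolding h_def .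
    then show "i \<in> ?T" using i by auto
  qed
  then have "card ?S \<le> card ?T" by (intro card_mono) auto
  then have "real (card ?S) \<le> (-a + e - (-b - e)) / h + 1"
    using cnt_upper[OF h, of "-b - e" "-a + e" N] ab e by linarith
  also have "\<dots> = (b - a + 2 * e) / L * real N + 1"
    unfolding h_def using Npos L by (simp add: field_simps)
  finally show "real (card ?S) / real N \<le> (b - a + 2 * e) / L + 1 / real N"
    using Npos by (simp add: field_simps)
  let ?T' = "{i. i \<le> N \<and> -b + e \<le> real i * h \<and> real i * h \<le> -a - e}"
  have "?T' \<subseteq> ?S"
  proof
    fix i assume "i \<in> ?T'"
    then have i: "i \<le> N" "-b + e \<le> real i * h" "real i * h \<le> -a - e" by auto
    have "\<bar>y i + real i * h\<bar> \<le> e" using y[OF i(1)] unfolding h_def .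
    then show "i \<in> ?S" using i by auto
  qed
  then have "card ?T' \<le> card ?S" by (intro card_mono) auto
  moreover have "real (card ?T') \<ge> (-a - e - (-b + e)) / h - 1"
    using cnt_lower[OF h, of "-b + e" "-a - e" N] ab e Nh by linarith
  ultimately have "real (card ?S) \<ge> (-a - e - (-b + e)) / h - 1" by linarith
  moreover have "(-a - e - (-b + e)) / h - 1 = (b - a - 2 * e) / L * real N - 1"
    unfolding h_def using Npos L by (simp add: field_simps)
  ultimately have X: "(b - a - 2 * e) / L * real N - 1 \<le> real (card ?S)" by simp
  have "((b - a - 2 * e) / L * real N - 1) / real N \<le> real (card ?S) / real N"
    using X Npos by (intro divide_right_mono) auto
  moreover have "((b - a - 2 * e) / L * real N - 1) / real N = (b - a - 2 * e) / L - 1 / real N"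
    using Npos by (simp add: diff_divide_distrib)
  ultimately show "(b - a - 2 * e) / L - 1 / real N \<le> real (card ?S) / real N"
    by simp
qed

theorem theorem2:
  fixes L :: real and F :: "nat \<Rightarrow> real" and x :: "nat \<Rightarrow> nat \<Rightarrow> real"
  assumes L_pos: "L > 0"
    and F_pos: "\<And>N. F N > 0"
    and F_small: "F \<in> o(\<lambda>N. real N)"
    and fp: "\<And>N. N \<ge> 1 \<Longrightarrow> fixed_point L (F N) N (x N)"
  shows "(\<lambda>N. Max ((\<lambda>k. \<bar>(x N (k - 1) - x N k) - L / real N\<bar>) ` {1..N}))
           \<in> o(\<lambda>N. 1 / real N) \<and>
         (\<forall>a b. -L \<le> a \<longrightarrow> a \<le> b \<longrightarrow> b \<le> 0 \<longrightarrow>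
           (\<lambda>N. real (card {i\<in>{0..N}. x N i \<in> {a..b}}) / real N)
             \<longlonglongrightarrow> integral {a..b} (\<lambda>t. 1 / L))"
proof
  have ev1: "eventually (\<lambda>N. F N \<le> real N / (2 * L^2)) at_top"
  proof -
    have "eventually (\<lambda>N. norm (F N) \<le> (1 / (2 * L^2)) * norm (real N)) at_top"
      using landau_o.smallD[OF F_small, of "1 / (2 * L^2)"] L_pos by simp
    then show ?thesis by eventually_elim (use F_pos in simp)
  qed
  have evN: "eventually (\<lambda>N::nat. N \<ge> 1) at_top" by simp
  show "(\<lambda>N. Max ((\<lambda>k. \<bar>(x N (k - 1) - x N k) - L / real N\<bar>) ` {1..N}))
           \<in> o(\<lambda>N. 1 / real N)"
  proof (rule landau_o.smallI)
    fix c :: real assume c: "c > 0"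
    have "eventually (\<lambda>N. norm (F N) \<le> (c / (2 * L^3)) * norm (real N)) at_top"
      using landau_o.smallD[OF F_small, of "c / (2 * L^3)"] L_pos c by simp
    then show "eventually (\<lambda>N. norm (Max ((\<lambda>k. \<bar>(x N (k - 1) - x N k) - L / real N\<bar>) ` {1..N}))
        \<le> c * norm (1 / real N)) at_top"
      using ev1 evN
    proof eventually_elim
      case (elim N)
      have Npos: "real N > 0" using elim by simp
      have B: "\<forall>k\<in>{1..N}. \<bar>x N (k - 1) - x N k - L / real N\<bar> \<le> 2 * L^3 * F N / (real N)^2"
        using lemA[OF L_pos F_pos elim(3) fp[OF elim(3)] elim(2)] .
      have "2 * L^3 * F N / (real N)^2 \<le> 2 * L^3 * ((c / (2 * L^3)) * real N) / (real N)^2"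
        using elim(1) F_pos[of N] L_pos Npos by (intro divide_right_mono mult_left_mono) auto
      also have "\<dots> = c / real N" using L_pos Npos by (simp add: field_simps power2_eq_square)
      finally have Bc: "2 * L^3 * F N / (real N)^2 \<le> c / real N" .
      let ?S = "(\<lambda>k. \<bar>(x N (k - 1) - x N k) - L / real N\<bar>) ` {1..N}"
      have ne: "?S \<noteq> {}" using elim(3) by auto
      have "Max ?S \<le> c / real N" using B Bc ne by (intro Max.boundedI) auto
      moreover have "0 \<le> Max ?S"
      proof -
        have "\<bar>(x N (1 - 1) - x N 1) - L / real N\<bar> \<in> ?S" using elim(3) by (intro imageI) auto
        then show ?thesis by (meson Max_ge abs_ge_zero finite_imageI finite_atLeastAtMost order_trans)
      qed
      ultimately show ?case using Npos by simp
    qed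
  qed
  show "\<forall>a b. -L \<le> a \<longrightarrow> a \<le> b \<longrightarrow> b \<le> 0 \<longrightarrow>
           (\<lambda>N. real (card {i\<in>{0..N}. x N i \<in> {a..b}}) / real N)
             \<longlonglongrightarrow> integral {a..b} (\<lambda>t. 1 / L)"
  proof (intro allI impI)
    fix a b assume ab: "-L \<le> a" "a \<le> b" "b \<le> 0"
    have int: "integral {a..b} (\<lambda>t. 1 / L) = (b - a) / L" using ab by simp
    define e where "e N = 2 * L^3 * F N / real N" for N
    have e0: "e \<longlonglongrightarrow> 0"
    proof -
      have "(\<lambda>N. F N / real N) \<longlonglongrightarrow> 0" using smalloD_tendsto[OF F_small] .
      then have "(\<lambda>N. 2 * L^3 * (F N / real N)) \<longlonglongrightarrow> 2 * L^3 * 0"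
        by (intro tendsto_mult tendsto_const)
      then show ?thesis unfolding e_def by simp
    qed
    have inv0: "(\<lambda>N. 1 / real N) \<longlonglongrightarrow> 0" by (rule lim_1_over_n)
    have lo: "(\<lambda>N. (b - a - 2 * e N) / L - 1 / real N) \<longlonglongrightarrow> (b - a - 2 * 0) / L - 0"
      by (intro tendsto_intros e0 inv0) (use L_pos in simp)
    have hi: "(\<lambda>N. (b - a + 2 * e N) / L + 1 / real N) \<longlonglongrightarrow> (b - a + 2 * 0) / L + 0"
      by (intro tendsto_intros e0 inv0) (use L_pos in simp)
    have bounds: "eventually (\<lambda>N. (b - a - 2 * e N) / L - 1 / real N
        \<le> real (card {i\<in>{0..N}. x N i \<in> {a..b}}) / real N \<and>
        real (card {i\<in>{0..N}. x N i \<in> {a..b}}) / real N \<le> (b - a + 2 * e N) / L + 1 / real N)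
        at_top"
      using ev1 evN
    proof eventually_elim
      case (elim N)
      have yb: "\<And>i. i \<le> N \<Longrightarrow> \<bar>x N i + real i * (L / real N)\<bar> \<le> e N"
        unfolding e_def using lemA2[OF L_pos F_pos elim(2) fp[OF elim(2)] elim(1)] by blast
      have "e N \<ge> 0" unfolding e_def using L_pos F_pos[of N] by simp
      then show ?case using lemB[OF L_pos elim(2) _ yb ab] by blast
    qed
    show "(\<lambda>N. real (card {i\<in>{0..N}. x N i \<in> {a..b}}) / real N)
             \<longlonglongrightarrow> integral {a..b} (\<lambda>t. 1 / L)"
      unfolding int
      by (rule tendsto_sandwich[OF _ _ lo[simplified] hi[simplified]])
        (use bounds in \<open>auto elim: eventually_mono\<close>)
  qed
qed

end
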